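(* Let $L$ be a finite list of boxes in $(0,1]^3$, let $k\ge2$ and $c\ge 2$ be integers, and run Steps 1–2 of algorithm 3SSP (described in the context) with parameters $k,c$. For $q=1,\dots,k$ let $w^q_1\ge w^q_2\ge\dots\ge w^q_{m^q}$ be the widths of the $m^q$ segments of type $q$ (segments containing items of group $G_q$), in the order they were opened. Let $g$ be the function (defined in the context) associated with a feasible solution $\bar\pi$ of the dual fractional bin packing LP for the instance $I(L)$ satisfying $\bar\pi_1\ge\dots\ge\bar\pi_p$, and let $G^q=\sum_{i=1}^{m^q} g(w^q_i)$. Then $$W(L) > (c-1)\sum_{q=1}^k G^q - ck,$$ where $W(L)=\sum_{R\in L} f_k(l(R))\,g(w(R))\,h(R)$.
   Context: Boxes $R=(l(R),w(R),h(R))$ (length, width, height). Algorithm 3SSP, Steps 1–2: partition $L$ into $G_1,\dots,G_k$, where for $i<k$, $G_i$ is the set of boxes of length in $(\frac1{i+1},\frac1i]$ and $G_k$ the set of boxes of length in $(0,\frac1k]$. Sort each group by non-increasing width. GNF (for $G_i$, $i<k$): while items remain, open a segment of size $(1,w_y,c)$ with $w_y$ the width of the first remaining item, divide it into $i$ slips of size $(\frac1i,w_y,c)$, and pack the remaining items in order into the slips by Next Fit with respect to height (stack in the current slip while total height $\le c$, else close it and move to the next slip); when all slips are closed, repeat. GNFDH (for $G_k$): while items remain, open a segment of size $(1,w_y,c)$ with $w_y$ the width of the first remaining item, find the maximal $j$ such that the first $j$ remaining items fit, ignoring widths, in the $1\times c$ length–height face by NFDH (sort by non-increasing height, pack in levels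 left to right, opening a new level on top when needed), pack them so, and repeat. $I(L)$ is the list of widths of all segments. Fractional bin packing: for a 1D instance with distinct sizes $s_1>s_2>\dots>s_p$ in $(0,1]$, a feasible pattern is a nonnegative integer vector $v=(v_1,\dots,v_p)$ with $\sum_j v_js_j\le1$. The dual LP is: maximize $\sum_j n_j\pi_j$ subject to $\sum_j v_j\pi_j\le1$ for every feasible pattern $v$ and $\pi\ge0$ ($n_j$ the multiplicity of size $s_j$). Given a feasible dual solution $\bar\pi$ with $\bar\pi_1\ge\dots\ge\bar\pi_p$, set $\bar\pi_{p+1}=0$, $s_0=1$, $s_{p+1}=0$ and define $g(0)=0$, $g(x)=\bar\pi_j$ for $x\in[s_j,s_{j-1})$ ($1\le j\le p+1$), and $g(1)=\bar\pi_1$. Weighting function: $f_k(x)=\frac1t$ if $\frac1{t+1}<x\le\frac1t$ with $1\le t<k$, and $f_k(x)=\frac{kx}{k-1}$ if $0<x\le\frac1k$. *)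

theory Defs
  imports Complex_Main "HOL-Library.Multiset"
begin

type_synonym box = "real \<times> real \<times> real"

definition len :: "box \<Rightarrow> real" where "len R = fst R"
definition wid :: "box \<Rightarrow> real" where "wid R = fst (snd R)"
definition hgt :: "box \<Rightarrow> real" where "hgt R = snd (snd R)"

definition unit_box :: "box \<Rightarrow> bool" where
  "unit_box R \<longleftrightarrow> 0 < len R \<and> len R \<le> 1 \<and> 0 < wid R \<and> wid R \<le> 1 \<and> 0 < hgt R \<and> hgt R \<le> 1"

definition in_group :: "nat \<Rightarrow> nat \<Rightarrow> box \<Rightarrow> bool" where
  "in_group k i R \<longleftrightarrow>
     (if i < k then 1 / real (i + 1) < len R \<and> len R \<le> 1 / real i
      else 0 < len R \<and> len R \<le> 1 / real k)"

(* Next Fit into one slip of height c, starting with accumulated height acc: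
   number of items stacked into the slip before it is closed *)
fun nf_take :: "real \<Rightarrow> real \<Rightarrow> box list \<Rightarrow> nat" where
  "nf_take c acc [] = 0"
| "nf_take c acc (x # xs) =
     (if acc + hgt x \<le> c then Suc (nf_take c (acc + hgt x) xs) else 0)"

fun slips_take :: "nat \<Rightarrow> real \<Rightarrow> box list \<Rightarrow> nat" where
  "slips_take 0 c xs = 0"
| "slips_take (Suc n) c xs =
     (let t = nf_take c 0 xs in t + slips_take n c (drop t xs))"

(* segments produced by GNF on group G_i (i slips per segment, segment height c);
   each segment is represented by the list of items packed into it.
   (The "max 1" only matters for items taller than c, which cannot occur here.) *)
function gnf_segs :: "nat \<Rightarrow> real \<Rightarrow> box list \<Rightarrow> box list list" where
  "gnf_segs i c [] = []"
| "gnf_segs i c (x # xs) =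
     (let n = max 1 (slips_take i c (x # xs))
      in take n (x # xs) # gnf_segs i c (drop n (x # xs)))"
  by pat_completeness auto
termination
  by (relation "measure (\<lambda>(i, c, xs). length xs)") (auto simp: Let_def)

(* NFDH on the length-height face of width 1: total height used, for a list
   already sorted by non-increasing height; cur = used length of current level,
   lh = height of the current level *)
fun nfdh_h :: "real \<Rightarrow> real \<Rightarrow> box list \<Rightarrow> real" where
  "nfdh_h cur lh [] = lh"
| "nfdh_h cur lh (x # xs) =
     (if cur + len x \<le> 1 then nfdh_h (cur + len x) lh xs
      else lh + nfdh_h (len x) (hgt x) xs)"

definition nfdh_height :: "box list \<Rightarrow> real" where
  "nfdh_height xs =
     (case sort_key (\<lambda>b. - hgt b) xs of [] \<Rightarrow> 0 | y # ys \<Rightarrow> nfdh_h (len y) (hgt y) ys)"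

definition nfdh_fits :: "real \<Rightarrow> box list \<Rightarrow> bool" where
  "nfdh_fits c xs \<longleftrightarrow> nfdh_height xs \<le> c"

definition gnfdh_count :: "real \<Rightarrow> box list \<Rightarrow> nat" where
  "gnfdh_count c xs = (GREATEST j. j \<le> length xs \<and> nfdh_fits c (take j xs))"

function gnfdh_segs :: "real \<Rightarrow> box list \<Rightarrow> box list list" where
  "gnfdh_segs c [] = []"
| "gnfdh_segs c (x # xs) =
     (let n = max 1 (gnfdh_count c (x # xs))
      in take n (x # xs) # gnfdh_segs c (drop n (x # xs)))"
  by pat_completeness auto
termination
  by (relation "measure (\<lambda>(c, xs). length xs)") (auto simp: Let_def)

definition segs :: "nat \<Rightarrow> real \<Rightarrow> nat \<Rightarrow> box list \<Rightarrow> box list list" where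
  "segs k c q Sq = (if q < k then gnf_segs q c Sq else gnfdh_segs c Sq)"

definition seg_widths :: "nat \<Rightarrow> real \<Rightarrow> nat \<Rightarrow> box list \<Rightarrow> real list" where
  "seg_widths k c q Sq = map (\<lambda>s. wid (hd s)) (segs k c q Sq)"

definition I_list :: "nat \<Rightarrow> real \<Rightarrow> (nat \<Rightarrow> box list) \<Rightarrow> real list" where
  "I_list k c S = concat (map (\<lambda>q. seg_widths k c q (S q)) [1..<k+1])"

(* sizes: the set of distinct sizes; \<pi>d assigns a dual value to each size *)
definition dual_feasible :: "real set \<Rightarrow> (real \<Rightarrow> real) \<Rightarrow> bool" where
  "dual_feasible Sz \<pi>d \<longleftrightarrow>
     (\<forall>s\<in>Sz. 0 \<le> \<pi>d s) \<and>
     (\<forall>v :: real \<Rightarrow> nat. (\<Sum>s\<in>Sz. real (v s) * s) \<le> 1 \<longrightarrow> (\<Sum>s\<in>Sz. real (v s) * \<pi>d s) \<le> 1)"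

(* g(x) = pi_j for x in [s_j, s_{j-1}), i.e. \<pi>d of the largest size <= x,
   g(x) = 0 if no size is <= x (this covers g(0)=0 and [0,s_p)), g(1) = pi_1 *)
definition gfun :: "real set \<Rightarrow> (real \<Rightarrow> real) \<Rightarrow> real \<Rightarrow> real" where
  "gfun Sz \<pi>d x = (if \<exists>s\<in>Sz. s \<le> x then \<pi>d (Max {s\<in>Sz. s \<le> x}) else 0)"

definition f_k :: "nat \<Rightarrow> real \<Rightarrow> real" where
  "f_k k x =
     (if 0 < x \<and> x \<le> 1 / real k then real k * x / (real k - 1)
      else if \<exists>t::nat. 1 \<le> t \<and> t < k \<and> 1 / real (t + 1) < x \<and> x \<le> 1 / real t
      then 1 / real (THE t::nat. 1 \<le> t \<and> t < k \<and> 1 / real (t + 1) < x \<and> x \<le> 1 / real t)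
      else 0)"

definition W :: "nat \<Rightarrow> (real \<Rightarrow> real) \<Rightarrow> box list \<Rightarrow> real" where
  "W k g L = sum_list (map (\<lambda>R. f_k k (len R) * g (wid R) * hgt R) L)"

end

theory Submission
  imports Defs
begin

definition area :: "box list \<Rightarrow> real" where
  "area xs = sum_list (map (\<lambda>b. len b * hgt b) xs)"

lemma nfA:
  assumes "sorted_wrt (\<lambda>a b. hgt b \<le> hgt a) ys"
    and "\<forall>y\<in>set ys. 0 \<le> len y \<and> len y \<le> \<delta> \<and> 0 \<le> hgt y"
    and "e \<le> \<delta>" "e \<le> cur" "0 \<le> D" "\<forall>y\<in>set ys. (cur - e) * hgt y \<le> D"
  shows "(1 - \<delta>) * (nfdh_h cur lh ys - lh) \<le> area ys + D"
  using assms
proof (induction ys arbitrary: cur lh e D)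
  case Nil
  then show ?case by (simp add: area_def)
next
  case (Cons y ys)
  have hy: "0 \<le> len y" "len y \<le> \<delta>" "0 \<le> hgt y" using Cons.prems(2) by auto
  have srt: "sorted_wrt (\<lambda>a b. hgt b \<le> hgt a) ys" "\<forall>z\<in>set ys. hgt z \<le> hgt y"
    using Cons.prems(1) by auto
  have Dy: "(cur - e) * hgt y \<le> D" using Cons.prems(6) by auto
  show ?case
  proof (cases "cur + len y \<le> 1")
    case True
    have "\<forall>z\<in>set ys. (cur + len y - e) * hgt z \<le> D + len y * hgt y"
    proof
      fix z assume z: "z \<in> set ys"
      have "(cur - e) * hgt z \<le> (cur - e) * hgt y"
        using srt(2) z Cons.prems(4) by (intro mult_left_mono) auto
      moreover have "len y * hgt z \<le> len y * hgt y"
        using srt(2) z hy by (intro mult_left_mono) auto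
      ultimately show "(cur + len y - e) * hgt z \<le> D + len y * hgt y"
        using Dy by (simp add: algebra_simps)
    qed
    then have "(1 - \<delta>) * (nfdh_h (cur + len y) lh ys - lh) \<le> area ys + (D + len y * hgt y)"
      using Cons.IH[OF srt(1), where cur="cur + len y" and e=e and D="D + len y * hgt y" and lh=lh] Cons.prems hy
      by (auto intro!: add_nonneg_nonneg mult_nonneg_nonneg)
    then show ?thesis using True by (simp add: area_def algebra_simps)
  next
    case False
    have IH: "(1 - \<delta>) * (nfdh_h (len y) (hgt y) ys - hgt y) \<le> area ys + 0"
      using Cons.IH[OF srt(1), where cur="len y" and e="len y" and D=0 and lh="hgt y"] Cons.prems hy by auto
    have "(1 - \<delta>) * hgt y \<le> (cur - e + len y) * hgt y"
      using False Cons.prems(3) hy by (intro mult_right_mono) auto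
    also have "\<dots> \<le> D + len y * hgt y" using Dy by (simp add: algebra_simps)
    finally have "(1 - \<delta>) * hgt y \<le> D + len y * hgt y" .
    then show ?thesis using False IH by (simp add: area_def algebra_simps)
  qed
qed

lemma nfB:
  assumes "sorted_wrt (\<lambda>a b. hgt b \<le> hgt a) ys"
    and "\<forall>y\<in>set ys. 0 \<le> len y \<and> len y \<le> \<delta> \<and> 0 \<le> hgt y"
    and "x \<in> set ys" "0 \<le> cur" "0 \<le> D" "\<forall>y\<in>set ys. cur * hgt y \<le> D"
  shows "(1 - \<delta>) * (nfdh_h cur lh ys - lh) \<le> area ys - len x * hgt x + D"
  using assms
proof (induction ys arbitrary: cur lh D)
  case Nil
  then show ?case by simp
next
  case (Cons y ys)
  have hy: "0 \<le> len y" "len y \<le> \<delta>" "0 \<le> hgt y" using Cons.prems(2) by auto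
  have srt: "sorted_wrt (\<lambda>a b. hgt b \<le> hgt a) ys" "\<forall>z\<in>set ys. hgt z \<le> hgt y"
    using Cons.prems(1) by auto
  have Dy: "cur * hgt y \<le> D" using Cons.prems(6) by auto
  have hz: "\<forall>z\<in>set ys. cur * hgt z \<le> D" using Cons.prems(6) by auto
  show ?case
  proof (cases "y = x")
    case yx: True
    show ?thesis
    proof (cases "cur + len y \<le> 1")
      case True
      have "(1 - \<delta>) * (nfdh_h (cur + len y) lh ys - lh) \<le> area ys + D"
        using nfA[OF srt(1), where \<delta>=\<delta> and e="len y" and cur="cur + len y" and D=D and lh=lh] Cons.prems hy hz by auto
      then show ?thesis using True yx by (simp add: area_def algebra_simps)
    next
      case False
      have IH: "(1 - \<delta>) * (nfdh_h (len y) (hgt y) ys - hgt y) \<le> area ys + 0"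
        using nfA[OF srt(1), where \<delta>=\<delta> and e="len y" and cur="len y" and D=0 and lh="hgt y"] Cons.prems hy by auto
      have "(1 - \<delta>) * hgt y \<le> cur * hgt y"
        using False hy by (intro mult_right_mono) auto
      then have "(1 - \<delta>) * hgt y \<le> D" using Dy by simp
      then show ?thesis using False IH yx by (simp add: area_def algebra_simps)
    qed
  next
    case yx: False
    then have xs: "x \<in> set ys" using Cons.prems(3) by auto
    show ?thesis
    proof (cases "cur + len y \<le> 1")
      case True
      have "\<forall>z\<in>set ys. (cur + len y) * hgt z \<le> D + len y * hgt y"
      proof
        fix z assume z: "z \<in> set ys"
        have "cur * hgt z \<le> D" using hz z by auto
        moreover have "len y * hgt z \<le> len y * hgt y"
          using srt(2) z hy by (intro mult_left_mono) auto
        ultimately show "(cur + len y) * hgt z \<le> D + len y * hgt y"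
          by (simp add: algebra_simps)
      qed
      then have "(1 - \<delta>) * (nfdh_h (cur + len y) lh ys - lh) \<le> area ys - len x * hgt x + (D + len y * hgt y)"
        using Cons.IH[OF srt(1) _ xs, where cur="cur + len y" and D="D + len y * hgt y" and lh=lh] Cons.prems hy
        by (auto intro!: add_nonneg_nonneg mult_nonneg_nonneg)
      then show ?thesis using True by (simp add: area_def algebra_simps)
    next
      case False
      have "\<forall>z\<in>set ys. len y * hgt z \<le> len y * hgt y"
        using srt(2) hy by (auto intro!: mult_left_mono)
      then have IH: "(1 - \<delta>) * (nfdh_h (len y) (hgt y) ys - hgt y) \<le> area ys - len x * hgt x + len y * hgt y"
        using Cons.IH[OF srt(1) _ xs, where cur="len y" and D="len y * hgt y" and lh="hgt y"] Cons.prems hy by auto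
      have "(1 - \<delta>) * hgt y \<le> cur * hgt y"
        using False hy by (intro mult_right_mono) auto
      then have "(1 - \<delta>) * hgt y \<le> D" using Dy by simp
      then show ?thesis using False IH by (simp add: area_def algebra_simps)
    qed
  qed
qed

lemma sum_list_map_mset: "sum_list (map f xs) = sum_mset (image_mset f (mset xs))"
  by (induction xs) auto

lemma sum_list_perm: fixes f :: "'a \<Rightarrow> real" assumes "mset xs = mset ys" shows "sum_list (map f xs) = sum_list (map f ys)"
  by (simp only: sum_list_map_mset assms)

lemma area_perm: "mset xs = mset ys \<Longrightarrow> area xs = area ys"
  unfolding area_def by (rule sum_list_perm)

lemma nfdh_main:
  assumes "\<forall>y\<in>set T. 0 \<le> len y \<and> len y \<le> \<delta> \<and> 0 \<le> hgt y \<and> hgt y \<le> 1"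
    and "x \<in> set T" "cc < nfdh_height T" "\<delta> \<le> 1" "0 < cc"
  shows "(1 - \<delta>) * (cc - 1) \<le> area T - len x * hgt x"
proof -
  define ys where "ys = sort_key (\<lambda>b. - hgt b) T"
  have ms: "mset ys = mset T" by (simp add: ys_def)
  then have st: "set ys = set T" by (metis set_mset_mset)
  have "sorted (map (\<lambda>b. - hgt b) ys)" by (simp add: ys_def)
  then have srt: "sorted_wrt (\<lambda>a b. hgt b \<le> hgt a) ys"
    by (simp add: sorted_wrt_map)
  obtain y ys' where yy: "ys = y # ys'"
    using assms(3,5) by (cases ys) (auto simp: nfdh_height_def ys_def[symmetric])
  have H: "nfdh_height T = nfdh_h (len y) (hgt y) ys'"
    by (simp add: nfdh_height_def ys_def[symmetric] yy)
  have srt': "sorted_wrt (\<lambda>a b. hgt b \<le> hgt a) ys'" using srt yy by simp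
  have bnd: "\<forall>z\<in>set ys'. 0 \<le> len z \<and> len z \<le> \<delta> \<and> 0 \<le> hgt z"
    using assms(1) st yy by auto
  have hy: "0 \<le> len y" "len y \<le> \<delta>" "0 \<le> hgt y" "hgt y \<le> 1" using assms(1) st yy by auto
  have key: "(1 - \<delta>) * (nfdh_h (len y) (hgt y) ys' - hgt y) \<le> area ys - len x * hgt x"
  proof (cases "y = x")
    case True
    then show ?thesis using nfA[OF srt' bnd, where e="len y" and cur="len y" and D=0 and lh="hgt y"] hy yy
      by (simp add: area_def)
  next
    case False
    then have "x \<in> set ys'" using assms(2) st yy by auto
    moreover have "\<forall>z\<in>set ys'. len y * hgt z \<le> len y * hgt y"
      using srt yy hy by (auto intro!: mult_left_mono)
    ultimately show ?thesis using nfB[OF srt' bnd, where x=x and cur="len y" and D="len y * hgt y" and lh="hgt y"] hy yy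
      by (simp add: area_def algebra_simps)
  qed
  have "(1 - \<delta>) * (cc - 1) \<le> (1 - \<delta>) * (nfdh_h (len y) (hgt y) ys' - hgt y)"
    using assms(3,4) H hy by (intro mult_left_mono) auto
  also have "\<dots> \<le> area T - len x * hgt x" using key area_perm[OF ms] by simp
  finally show ?thesis .
qed


fun goodsegs :: "(box list \<Rightarrow> bool) \<Rightarrow> box list list \<Rightarrow> bool" where
  "goodsegs P [] = True"
| "goodsegs P [s] = True"
| "goodsegs P (s # s' # r) = (P s \<and> goodsegs P (s' # r))"

lemma goodsegs_Cons: "goodsegs P (s # r) = ((r \<noteq> [] \<longrightarrow> P s) \<and> goodsegs P r)"
  by (cases r) auto

lemma goodsegs_mono: "goodsegs P ss \<Longrightarrow> (\<forall>s\<in>set ss. P s \<longrightarrow> Q s) \<Longrightarrow> goodsegs Q ss"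
  by (induction P ss rule: goodsegs.induct) auto

lemma seg_bound:
  fixes \<phi> :: "box \<Rightarrow> real" and g :: "real \<Rightarrow> real"
  assumes "goodsegs P ss" "\<forall>s. P s \<longrightarrow> cc \<le> sum_list (map \<phi> s)"
    "\<forall>s\<in>set ss. s \<noteq> []" "sorted_wrt (\<lambda>a b. wid b \<le> wid a) (concat ss)"
    "\<forall>R\<in>set (concat ss). 0 \<le> \<phi> R" "\<And>x. 0 \<le> g x" "\<And>x y. x \<le> y \<Longrightarrow> g x \<le> g y" "0 \<le> cc"
  shows "cc * sum_list (map (\<lambda>s. g (wid (hd s))) (tl ss))
           \<le> sum_list (map (\<lambda>R. \<phi> R * g (wid R)) (concat ss))"
  using assms
proof (induction P ss rule: goodsegs.induct)
  case (1 P)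
  then show ?case by simp
next
  case (2 P s)
  then show ?case by (auto intro!: sum_list_nonneg mult_nonneg_nonneg)
next
  case (3 P s s' r)
  have IH: "cc * sum_list (map (\<lambda>s. g (wid (hd s))) r)
           \<le> sum_list (map (\<lambda>R. \<phi> R * g (wid R)) (concat (s' # r)))"
    using 3 by (auto simp: sorted_wrt_append)
  have hd: "hd s' \<in> set (concat (s' # r))" using "3.prems"(3) by auto
  have le: "\<forall>R\<in>set s. wid (hd s') \<le> wid R"
    using "3.prems"(4) hd by (auto simp: sorted_wrt_append)
  have "cc * g (wid (hd s')) \<le> sum_list (map \<phi> s) * g (wid (hd s'))"
    using "3.prems"(1,2) "3.prems"(6) by (intro mult_right_mono) auto
  also have "\<dots> = sum_list (map (\<lambda>R. \<phi> R * g (wid (hd s'))) s)"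
    by (simp add: sum_list_mult_const)
  also have "\<dots> \<le> sum_list (map (\<lambda>R. \<phi> R * g (wid R)) s)"
    using le "3.prems"(5,7) by (intro sum_list_mono mult_left_mono) auto
  finally have "cc * g (wid (hd s')) \<le> sum_list (map (\<lambda>R. \<phi> R * g (wid R)) s)" .
  with IH show ?case by (simp add: algebra_simps)
qed

lemma nf_bound: "\<forall>y\<in>set xs. hgt y \<le> 1 \<Longrightarrow> nf_take c acc xs < length xs \<Longrightarrow>
   c - 1 < acc + sum_list (map hgt (take (nf_take c acc xs) xs))"
proof (induction xs arbitrary: acc)
  case Nil
  then show ?case by simp
next
  case (Cons y ys)
  show ?case
  proof (cases "acc + hgt y \<le> c")
    case True
    then have "c - 1 < acc + hgt y + sum_list (map hgt (take (nf_take c (acc + hgt y) ys) ys))"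
      using Cons.IH[of "acc + hgt y"] Cons.prems by auto
    then show ?thesis using True by (simp add: algebra_simps)
  next
    case False
    then show ?thesis using Cons.prems by auto
  qed
qed

lemma slips_bound: "\<forall>y\<in>set xs. hgt y \<le> 1 \<Longrightarrow> slips_take n c xs < length xs \<Longrightarrow>
   real n * (c - 1) \<le> sum_list (map hgt (take (slips_take n c xs) xs))"
proof (induction n arbitrary: xs)
  case 0
  then show ?case by simp
next
  case (Suc n)
  define t where "t = nf_take c 0 xs"
  define s where "s = slips_take n c (drop t xs)"
  have eq: "slips_take (Suc n) c xs = t + s" by (simp add: t_def s_def Let_def)
  have lt: "t < length xs" "s < length (drop t xs)" using Suc.prems eq by auto
  have a: "c - 1 < sum_list (map hgt (take t xs))"
    using nf_bound[of xs c 0] Suc.prems lt by (simp add: t_def)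
  have b: "real n * (c - 1) \<le> sum_list (map hgt (take s (drop t xs)))"
    using Suc.IH[of "drop t xs"] Suc.prems lt by (auto simp: s_def dest: in_set_dropD)
  have "take (t + s) xs = take t xs @ take s (drop t xs)" by (simp add: take_add)
  then show ?case using a b eq by (simp add: algebra_simps)
qed

lemma slips_pos: "1 \<le> c \<Longrightarrow> hgt x \<le> 1 \<Longrightarrow> 0 < i \<Longrightarrow> 1 \<le> slips_take i c (x # xs)"
  by (cases i) (auto simp: Let_def)

lemma gnf_concat: "concat (gnf_segs i c xs) = xs"
  by (induction i c xs rule: gnf_segs.induct) (simp_all add: Let_def)

lemma gnf_nonempty: "s \<in> set (gnf_segs i c xs) \<Longrightarrow> s \<noteq> []"
  by (induction i c xs rule: gnf_segs.induct) (auto simp: Let_def)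

lemma gnf_nil_iff: "gnf_segs i c xs = [] \<longleftrightarrow> xs = []"
  by (cases xs) (simp_all add: Let_def)

lemma gnf_good: "\<forall>y\<in>set xs. hgt y \<le> 1 \<Longrightarrow> 1 \<le> c \<Longrightarrow> 0 < i \<Longrightarrow>
  goodsegs (\<lambda>s. real i * (c - 1) \<le> sum_list (map hgt s)) (gnf_segs i c xs)"
proof (induction i c xs rule: gnf_segs.induct)
  case (1 i c)
  then show ?case by simp
next
  case (2 i c x xs)
  define n where "n = max 1 (slips_take i c (x # xs))"
  have n: "n = slips_take i c (x # xs)" using slips_pos[of c x i xs] 2 by (simp add: n_def)
  have dr: "\<forall>y\<in>set (drop n (x # xs)). hgt y \<le> 1"
    using "2.prems"(1) set_drop_subset[of n "x # xs"] by blast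
  have IH: "goodsegs (\<lambda>s. real i * (c - 1) \<le> sum_list (map hgt s)) (gnf_segs i c (drop n (x # xs)))"
    using "2.IH"[OF n_def dr "2.prems"(2,3)] .
  have "gnf_segs i c (drop n (x # xs)) \<noteq> [] \<Longrightarrow> real i * (c - 1) \<le> sum_list (map hgt (take n (x # xs)))"
  proof -
    assume "gnf_segs i c (drop n (x # xs)) \<noteq> []"
    then have "n < length (x # xs)" by (auto simp: gnf_nil_iff)
    then show ?thesis using slips_bound[of "x # xs" i c] 2 n by auto
  qed
  moreover have "gnf_segs i c (x # xs) = take n (x # xs) # gnf_segs i c (drop n (x # xs))"
    by (simp add: Let_def n_def)
  ultimately show ?case using IH by (simp only: goodsegs_Cons) blast
qed

lemma gnfdh_concat: "concat (gnfdh_segs c xs) = xs"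
  by (induction c xs rule: gnfdh_segs.induct) (simp_all add: Let_def)

lemma gnfdh_nonempty: "s \<in> set (gnfdh_segs c xs) \<Longrightarrow> s \<noteq> []"
  by (induction c xs rule: gnfdh_segs.induct) (auto simp: Let_def)

lemma gnfdh_nil_iff: "gnfdh_segs c xs = [] \<longleftrightarrow> xs = []"
  by (cases xs) (simp_all add: Let_def)

lemma gnfdh_count_props:
  assumes "zs \<noteq> []" "\<forall>y\<in>set zs. hgt y \<le> 1" "1 \<le> c"
  shows "1 \<le> gnfdh_count c zs" "gnfdh_count c zs < length zs \<Longrightarrow>
           c < nfdh_height (take (Suc (gnfdh_count c zs)) zs)"
proof -
  define P where "P = (\<lambda>j. j \<le> length zs \<and> nfdh_fits c (take j zs))"
  obtain x xs where zs: "zs = x # xs" using assms(1) by (cases zs) auto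
  have P1: "P 1" using assms zs by (simp add: P_def nfdh_fits_def nfdh_height_def)
  have bnd: "\<And>y. P y \<Longrightarrow> y \<le> length zs" by (simp add: P_def)
  have G: "gnfdh_count c zs = Greatest P" by (simp add: gnfdh_count_def P_def)
  show "1 \<le> gnfdh_count c zs" using Greatest_le_nat[of P 1, OF P1 bnd] G by simp
  have PG: "P (Greatest P)" using GreatestI_nat[of P 1, OF P1 bnd] .
  assume lt: "gnfdh_count c zs < length zs"
  show "c < nfdh_height (take (Suc (gnfdh_count c zs)) zs)"
  proof (rule ccontr)
    assume "\<not> c < nfdh_height (take (Suc (gnfdh_count c zs)) zs)"
    then have "P (Suc (gnfdh_count c zs))" using lt by (simp add: P_def nfdh_fits_def)
    then have "Suc (Greatest P) \<le> Greatest P" using Greatest_le_nat[OF _ bnd] G by metis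
    then show False by simp
  qed
qed

lemma area_snoc: "area (xs @ [y]) = area xs + len y * hgt y"
  by (simp add: area_def)

lemma gnfdh_good: "\<forall>y\<in>set xs. 0 \<le> len y \<and> len y \<le> \<delta> \<and> 0 \<le> hgt y \<and> hgt y \<le> 1 \<Longrightarrow> 1 \<le> c \<Longrightarrow> \<delta> \<le> 1 \<Longrightarrow>
  goodsegs (\<lambda>s. (1 - \<delta>) * (c - 1) \<le> area s) (gnfdh_segs c xs)"
proof (induction c xs rule: gnfdh_segs.induct)
  case (1 c)
  then show ?case by simp
next
  case (2 c x xs)
  define n where "n = max 1 (gnfdh_count c (x # xs))"
  have n: "n = gnfdh_count c (x # xs)" using gnfdh_count_props(1)[of "x # xs" c] 2 by (simp add: n_def)
  have dr: "\<forall>y\<in>set (drop n (x # xs)). 0 \<le> len y \<and> len y \<le> \<delta> \<and> 0 \<le> hgt y \<and> hgt y \<le> 1"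
    using "2.prems"(1) set_drop_subset[of n "x # xs"] by blast
  have IH: "goodsegs (\<lambda>s. (1 - \<delta>) * (c - 1) \<le> area s) (gnfdh_segs c (drop n (x # xs)))"
    using "2.IH"[OF n_def dr "2.prems"(2,3)] .
  have "gnfdh_segs c (drop n (x # xs)) \<noteq> [] \<Longrightarrow> (1 - \<delta>) * (c - 1) \<le> area (take n (x # xs))"
  proof -
    assume "gnfdh_segs c (drop n (x # xs)) \<noteq> []"
    then have lt: "n < length (x # xs)" by (auto simp: gnfdh_nil_iff)
    then have H: "c < nfdh_height (take (Suc n) (x # xs))"
      using gnfdh_count_props(2)[of "x # xs" c] 2 n by auto
    have T: "take (Suc n) (x # xs) = take n (x # xs) @ [(x # xs) ! n]"
      by (metis lt take_Suc_conv_app_nth)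
    have "(1 - \<delta>) * (c - 1) \<le> area (take (Suc n) (x # xs)) - len ((x # xs) ! n) * hgt ((x # xs) ! n)"
    proof -
      have bT: "\<forall>y\<in>set (take (Suc n) (x # xs)). 0 \<le> len y \<and> len y \<le> \<delta> \<and> 0 \<le> hgt y \<and> hgt y \<le> 1"
        using "2.prems"(1) set_take_subset[of "Suc n" "x # xs"] by blast
      have xin: "(x # xs) ! n \<in> set (take (Suc n) (x # xs))" unfolding T by simp
      show ?thesis using nfdh_main[OF bT xin H "2.prems"(3)] "2.prems"(2) by simp
    qed
    then show ?thesis unfolding T area_snoc by simp
  qed
  moreover have "gnfdh_segs c (x # xs) = take n (x # xs) # gnfdh_segs c (drop n (x # xs))"
    by (simp add: Let_def n_def)
  ultimately show ?case using IH by (simp only: goodsegs_Cons) blast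
qed


lemma gfun_nonneg:
  assumes "finite Sz" "\<forall>s\<in>Sz. 0 \<le> \<pi>d s"
  shows "0 \<le> gfun Sz \<pi>d x"
proof (cases "\<exists>s\<in>Sz. s \<le> x")
  case True
  then have "Max {s\<in>Sz. s \<le> x} \<in> {s\<in>Sz. s \<le> x}" using assms(1) by (intro Max_in) auto
  then show ?thesis using True assms(2) by (simp add: gfun_def)
next
  case False
  then show ?thesis by (simp add: gfun_def)
qed

lemma gfun_mono:
  assumes "finite Sz" "\<forall>s\<in>Sz. 0 \<le> \<pi>d s" "\<forall>s\<in>Sz. \<forall>t\<in>Sz. t \<le> s \<longrightarrow> \<pi>d t \<le> \<pi>d s" "x \<le> y"
  shows "gfun Sz \<pi>d x \<le> gfun Sz \<pi>d y"
proof (cases "\<exists>s\<in>Sz. s \<le> x")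
  case True
  then have Ty: "\<exists>s\<in>Sz. s \<le> y" using assms(4) by (auto intro: order_trans)
  have m1: "Max {s\<in>Sz. s \<le> x} \<in> {s\<in>Sz. s \<le> x}" using True assms(1) by (intro Max_in) auto
  have m2: "Max {s\<in>Sz. s \<le> y} \<in> {s\<in>Sz. s \<le> y}" using Ty assms(1) by (intro Max_in) auto
  have "Max {s\<in>Sz. s \<le> x} \<le> Max {s\<in>Sz. s \<le> y}"
    using True assms(1,4) by (intro Max_mono) auto
  then show ?thesis using True Ty m1 m2 assms(3) by (simp add: gfun_def)
next
  case False
  then show ?thesis using gfun_nonneg[OF assms(1,2)] by (simp add: gfun_def)
qed

lemma gfun_le1:
  assumes "finite Sz" "dual_feasible Sz \<pi>d" "x \<le> 1"
  shows "gfun Sz \<pi>d x \<le> 1"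
proof (cases "\<exists>s\<in>Sz. s \<le> x")
  case True
  define s0 where "s0 = Max {s\<in>Sz. s \<le> x}"
  have mi: "s0 \<in> {s\<in>Sz. s \<le> x}" unfolding s0_def using True assms(1) by (intro Max_in) auto
  then have m: "s0 \<in> Sz" "s0 \<le> x" by auto
  define v :: "real \<Rightarrow> nat" where "v = (\<lambda>t. if t = s0 then 1 else 0)"
  have "(\<Sum>s\<in>Sz. real (v s) * s) = (\<Sum>s\<in>Sz. if s = s0 then s0 else 0)"
    by (rule sum.cong) (auto simp: v_def)
  then have e1: "(\<Sum>s\<in>Sz. real (v s) * s) = s0" using m assms(1) by (simp add: sum.delta)
  have "(\<Sum>s\<in>Sz. real (v s) * \<pi>d s) = (\<Sum>s\<in>Sz. if s = s0 then \<pi>d s0 else 0)"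
    by (rule sum.cong) (auto simp: v_def)
  then have e2: "(\<Sum>s\<in>Sz. real (v s) * \<pi>d s) = \<pi>d s0" using m assms(1) by (simp add: sum.delta)
  have "(\<Sum>s\<in>Sz. real (v s) * s) \<le> 1" using e1 m assms(3) by simp
  then have "\<pi>d s0 \<le> 1" using assms(2) e2 unfolding dual_feasible_def by metis
  then show ?thesis using True by (simp add: gfun_def s0_def)
next
  case False
  then show ?thesis by (simp add: gfun_def)
qed

lemma fk_small: "0 < x \<Longrightarrow> x \<le> 1 / real k \<Longrightarrow> f_k k x = real k * x / (real k - 1)"
  by (simp add: f_k_def)

lemma fk_mid:
  assumes "1 \<le> q" "q < k" "1 / real (q + 1) < x" "x \<le> 1 / real q"
  shows "f_k k x = 1 / real q"
proof -
  have "1 / real k \<le> 1 / real (q + 1)" using assms(1,2) by (intro divide_left_mono) auto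
  then have n1: "\<not> (0 < x \<and> x \<le> 1 / real k)" using assms(3) by auto
  have uniq: "t = q" if "1 \<le> t" "t < k" "1 / real (t + 1) < x" "x \<le> 1 / real t" for t
  proof -
    have "1 / real (t + 1) < 1 / real q" using that assms by linarith
    then have a: "real q < real (t + 1)" using assms(1) by (simp add: frac_less2 divide_less_cancel field_simps)
    have "1 / real (q + 1) < 1 / real t" using that assms by linarith
    then have b: "real t < real (q + 1)" using that(1) by (simp add: divide_less_cancel field_simps)
    show ?thesis using a b by linarith
  qed
  have ex: "\<exists>t::nat. 1 \<le> t \<and> t < k \<and> 1 / real (t + 1) < x \<and> x \<le> 1 / real t"
    using assms by blast
  have the_eq: "(THE t::nat. 1 \<le> t \<and> t < k \<and> 1 / real (t + 1) < x \<and> x \<le> 1 / real t) = q"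
  proof (rule the_equality)
    show "1 \<le> q \<and> q < k \<and> 1 / real (q + 1) < x \<and> x \<le> 1 / real q" using assms by blast
  next
    fix t assume "1 \<le> t \<and> t < k \<and> 1 / real (t + 1) < x \<and> x \<le> 1 / real t"
    then show "t = q" using uniq by blast
  qed
  show ?thesis unfolding f_k_def by (subst if_not_P[OF n1], subst if_P[OF ex], simp only: the_eq)
qed

lemma in_group_unique:
  assumes "1 \<le> q1" "q1 \<le> k" "1 \<le> q2" "q2 \<le> k" "in_group k q1 R" "in_group k q2 R"
  shows "q1 = q2"
proof (rule ccontr)
  assume ne: "q1 \<noteq> q2"
  have *: False if "1 \<le> a" "a < b" "b \<le> k" "in_group k a R" "in_group k b R" for a b
  proof -
    have a1: "1 / real (a + 1) < len R" using that by (simp add: in_group_def)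
    have "len R \<le> 1 / real b" using that by (auto simp: in_group_def split: if_splits)
    moreover have "1 / real b \<le> 1 / real (a + 1)" using that by (intro divide_left_mono) auto
    ultimately show False using a1 by linarith
  qed
  show False using ne assms *[of q1 q2] *[of q2 q1] by (cases "q1 < q2") auto
qed

lemma group_split:
  fixes w :: "box \<Rightarrow> real"
  assumes "finite A" "\<forall>R\<in>set L. 0 \<le> w R"
    "\<forall>R\<in>set L. \<forall>q1\<in>A. \<forall>q2\<in>A. P q1 R \<longrightarrow> P q2 R \<longrightarrow> q1 = q2"
  shows "(\<Sum>q\<in>A. sum_list (map w (filter (P q) L))) \<le> sum_list (map w L)"
  using assms(2,3)
proof (induction L)
  case Nil
  then show ?case by simp
next
  case (Cons R L)
  have IH: "(\<Sum>q\<in>A. sum_list (map w (filter (P q) L))) \<le> sum_list (map w L)"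
    using Cons by auto
  have split: "(\<Sum>q\<in>A. sum_list (map w (filter (P q) (R # L))))
     = (\<Sum>q\<in>A. (if P q R then w R else 0)) + (\<Sum>q\<in>A. sum_list (map w (filter (P q) L)))"
    by (simp add: sum.distrib[symmetric] if_distrib cong: if_cong) (rule sum.cong, auto)
  have eq: "(\<Sum>q\<in>A. (if P q R then w R else 0)) = (\<Sum>q\<in>{q\<in>A. P q R}. w R)"
    by (rule sum.inter_filter[symmetric, OF assms(1)])
  have "card {q\<in>A. P q R} \<le> 1"
    using Cons.prems(2) by (auto simp: card_le_Suc0_iff_eq assms(1))
  moreover have "(\<Sum>q\<in>{q\<in>A. P q R}. w R) = real (card {q\<in>A. P q R}) * w R" by simp
  ultimately have "(\<Sum>q\<in>{q\<in>A. P q R}. w R) \<le> w R"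
    using Cons.prems(1) by (simp add: mult_left_le_one_le)
  moreover have "sum_list (map w (R # L)) = w R + sum_list (map w L)" by simp
  ultimately show ?case using split eq IH by linarith
qed


lemma fk_nonneg: "0 < x \<Longrightarrow> 2 \<le> k \<Longrightarrow> 0 \<le> f_k k x"
  unfolding f_k_def by auto

lemma group_bound:
  fixes k c q :: nat and xs :: "box list" and g :: "real \<Rightarrow> real"
  assumes q: "1 \<le> q" "q \<le> k" and k2: "2 \<le> k" and c2: "2 \<le> c"
    and el: "\<forall>R\<in>set xs. unit_box R \<and> in_group k q R"
    and srt: "sorted_wrt (\<lambda>a b. wid b \<le> wid a) xs"
    and g0: "\<And>x. 0 \<le> g x" and gm: "\<And>x y. x \<le> y \<Longrightarrow> g x \<le> g y" and g1: "\<And>x. x \<le> 1 \<Longrightarrow> g x \<le> 1"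
  shows "(real c - 1) * sum_list (map g (seg_widths k (real c) q xs)) - (real c - 1)
           \<le> sum_list (map (\<lambda>R. f_k k (len R) * g (wid R) * hgt R) xs)"
proof -
  define ss where "ss = segs k (real c) q xs"
  have cc: "concat ss = xs" by (simp add: ss_def segs_def gnf_concat gnfdh_concat)
  have ne: "\<forall>s\<in>set ss. s \<noteq> []" using gnf_nonempty gnfdh_nonempty by (auto simp: ss_def segs_def)
  define \<phi> where "\<phi> = (\<lambda>R. f_k k (len R) * hgt R)"
  have sub: "\<And>s. s \<in> set ss \<Longrightarrow> set s \<subseteq> set xs" using cc by auto
  have ub: "\<forall>R\<in>set xs. 0 < len R \<and> len R \<le> 1 \<and> 0 < wid R \<and> wid R \<le> 1 \<and> 0 < hgt R \<and> hgt R \<le> 1"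
    using el by (auto simp: unit_box_def)
  have phinn: "\<forall>R\<in>set xs. 0 \<le> \<phi> R"
    using ub k2 fk_nonneg by (auto simp: \<phi>_def intro!: mult_nonneg_nonneg)
  have good: "goodsegs (\<lambda>s. real c - 1 \<le> sum_list (map \<phi> s)) ss"
  proof (cases "q < k")
    case True
    have fv: "\<forall>R\<in>set xs. f_k k (len R) = 1 / real q"
      using el True q by (auto simp: in_group_def intro!: fk_mid)
    have g1: "goodsegs (\<lambda>s. real q * (real c - 1) \<le> sum_list (map hgt s)) ss"
      unfolding ss_def segs_def using True ub q c2 by (auto intro!: gnf_good)
    show ?thesis
    proof (rule goodsegs_mono[OF g1], intro ballI impI)
      fix s assume s: "s \<in> set ss" and h: "real q * (real c - 1) \<le> sum_list (map hgt s)"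
      have "sum_list (map \<phi> s) = sum_list (map (\<lambda>R. (1 / real q) * hgt R) s)"
        using fv sub[OF s] by (auto simp: \<phi>_def intro!: arg_cong[where f=sum_list] map_cong)
      also have "\<dots> = (1 / real q) * sum_list (map hgt s)" by (rule sum_list_const_mult)
      also have "\<dots> \<ge> (1 / real q) * (real q * (real c - 1))"
        using h q by (intro mult_left_mono) auto
      finally show "real c - 1 \<le> sum_list (map \<phi> s)" using q by simp
    qed
  next
    case False
    then have qk: "q = k" using q by simp
    have fv: "\<forall>R\<in>set xs. f_k k (len R) = real k * len R / (real k - 1)"
      using el qk ub by (auto simp: in_group_def intro!: fk_small)
    have lk: "\<forall>R\<in>set xs. len R \<le> 1 / real k" using el qk by (auto simp: in_group_def)
    have b: "\<forall>y\<in>set xs. 0 \<le> len y \<and> len y \<le> 1 / real k \<and> 0 \<le> hgt y \<and> hgt y \<le> 1"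
      using ub lk by fastforce
    have "goodsegs (\<lambda>s. (1 - 1 / real k) * (real c - 1) \<le> area s) (gnfdh_segs (real c) xs)"
      by (rule gnfdh_good[OF b]) (use k2 c2 in auto)
    then have g1: "goodsegs (\<lambda>s. (1 - 1 / real k) * (real c - 1) \<le> area s) ss"
      unfolding ss_def segs_def using False by simp
    show ?thesis
    proof (rule goodsegs_mono[OF g1], intro ballI impI)
      fix s assume s: "s \<in> set ss" and h: "(1 - 1 / real k) * (real c - 1) \<le> area s"
      have "sum_list (map \<phi> s) = sum_list (map (\<lambda>R. (real k / (real k - 1)) * (len R * hgt R)) s)"
        using fv sub[OF s] by (auto simp: \<phi>_def intro!: arg_cong[where f=sum_list] map_cong)
      also have "\<dots> = (real k / (real k - 1)) * area s" unfolding area_def by (rule sum_list_const_mult)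
      also have "\<dots> \<ge> (real k / (real k - 1)) * ((1 - 1 / real k) * (real c - 1))"
        using h k2 by (intro mult_left_mono) auto
      also have "(real k / (real k - 1)) * ((1 - 1 / real k) * (real c - 1)) = real c - 1"
        using k2 by (simp add: field_simps)
      finally show "real c - 1 \<le> sum_list (map \<phi> s)" by simp
    qed
  qed
  have main: "(real c - 1) * sum_list (map (\<lambda>s. g (wid (hd s))) (tl ss))
      \<le> sum_list (map (\<lambda>R. \<phi> R * g (wid R)) (concat ss))"
    using seg_bound[OF good, of "real c - 1" \<phi> g] ne srt phinn g0 gm c2 cc by auto
  have rhs: "sum_list (map (\<lambda>R. f_k k (len R) * g (wid R) * hgt R) xs) = sum_list (map (\<lambda>R. \<phi> R * g (wid R)) xs)"
    by (simp add: \<phi>_def mult_ac)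
  have sw: "seg_widths k (real c) q xs = map (\<lambda>s. wid (hd s)) ss" by (simp add: seg_widths_def ss_def)
  show ?thesis
  proof (cases ss)
    case Nil
    then have "xs = []" using cc by simp
    then show ?thesis using sw Nil c2 by simp
  next
    case (Cons s1 rest)
    have "hd s1 \<in> set xs" using ne Cons cc by (cases s1) auto
    then have "g (wid (hd s1)) \<le> 1" using ub g1 by auto
    then have "(real c - 1) * g (wid (hd s1)) \<le> real c - 1" using c2 by (simp add: mult_left_le)
    have m2: "(real c - 1) * sum_list (map (\<lambda>s. g (wid (hd s))) rest) \<le> sum_list (map (\<lambda>R. \<phi> R * g (wid R)) xs)"
      using main Cons unfolding cc by simp
    have lhs: "sum_list (map g (seg_widths k (real c) q xs)) = g (wid (hd s1)) + sum_list (map (\<lambda>s. g (wid (hd s))) rest)"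
      using sw Cons by (simp add: comp_def)
    show ?thesis unfolding rhs lhs distrib_left using m2 \<open>(real c - 1) * g (wid (hd s1)) \<le> real c - 1\<close> by linarith
  qed
qed

theorem lemma6:
  fixes L :: "box list" and k c :: nat
    and S :: "nat \<Rightarrow> box list" and \<pi>d :: "real \<Rightarrow> real"
  assumes boxes: "\<forall>R\<in>set L. unit_box R"
    and k2: "k \<ge> 2" and c2: "c \<ge> 2"
    and sorted_groups: "\<forall>q\<in>{1..k}. mset (S q) = mset (filter (in_group k q) L)
                          \<and> sorted_wrt (\<lambda>a b. wid b \<le> wid a) (S q)"
    and feas: "dual_feasible (set (I_list k (real c) S)) \<pi>d"
    and mono: "\<forall>s\<in>set (I_list k (real c) S). \<forall>t\<in>set (I_list k (real c) S).
                 t \<le> s \<longrightarrow> \<pi>d t \<le> \<pi>d s"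
  shows "W k (gfun (set (I_list k (real c) S)) \<pi>d) L >
         (real c - 1) * (\<Sum>q=1..k. sum_list (map (gfun (set (I_list k (real c) S)) \<pi>d)
                                                 (seg_widths k (real c) q (S q))))
         - real c * real k"
proof -
  define Sz where "Sz = set (I_list k (real c) S)"
  define g where "g = gfun Sz \<pi>d"
  define w where "w = (\<lambda>R. f_k k (len R) * g (wid R) * hgt R)"
  have fin: "finite Sz" by (simp add: Sz_def)
  have pos: "\<forall>s\<in>Sz. 0 \<le> \<pi>d s" using feas by (simp add: Sz_def dual_feasible_def)
  have g0: "\<And>x. 0 \<le> g x" unfolding g_def by (rule gfun_nonneg[OF fin pos])
  have gm: "\<And>x y. x \<le> y \<Longrightarrow> g x \<le> g y" unfolding g_def
    by (rule gfun_mono[OF fin pos]) (use mono in \<open>auto simp: Sz_def\<close>)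
  have g1: "\<And>x. x \<le> 1 \<Longrightarrow> g x \<le> 1" unfolding g_def
    by (rule gfun_le1[OF fin]) (use feas in \<open>auto simp: Sz_def\<close>)
  have wnn: "\<forall>R\<in>set L. 0 \<le> w R"
    using boxes k2 fk_nonneg g0 by (auto simp: w_def unit_box_def intro!: mult_nonneg_nonneg)
  have split: "(\<Sum>q\<in>{1..k}. sum_list (map w (filter (in_group k q) L))) \<le> sum_list (map w L)"
    by (rule group_split) (use wnn in_group_unique in auto)
  have perm: "\<And>q. q \<in> {1..k} \<Longrightarrow> sum_list (map w (filter (in_group k q) L)) = sum_list (map w (S q))"
    using sorted_groups by (metis sum_list_perm)
  have gb: "\<And>q. q \<in> {1..k} \<Longrightarrow> (real c - 1) * sum_list (map g (seg_widths k (real c) q (S q))) - (real c - 1)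
              \<le> sum_list (map w (S q))"
  proof -
    fix q assume q: "q \<in> {1..k}"
    have st: "set (S q) = set (filter (in_group k q) L)" using sorted_groups q by (metis mset_eq_setD)
    have "\<forall>R\<in>set (S q). unit_box R \<and> in_group k q R" using st boxes by auto
    then show "(real c - 1) * sum_list (map g (seg_widths k (real c) q (S q))) - (real c - 1)
              \<le> sum_list (map w (S q))"
      unfolding w_def using q k2 c2 sorted_groups g0 gm g1 by (intro group_bound) auto
  qed
  have "(\<Sum>q\<in>{1..k}. (real c - 1) * sum_list (map g (seg_widths k (real c) q (S q))) - (real c - 1))
        \<le> (\<Sum>q\<in>{1..k}. sum_list (map w (S q)))"
    using gb by (rule sum_mono)
  also have "\<dots> = (\<Sum>q\<in>{1..k}. sum_list (map w (filter (in_group k q) L)))"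
    using perm by simp
  also have "\<dots> \<le> sum_list (map w L)" by (rule split)
  finally have A: "(real c - 1) * (\<Sum>q=1..k. sum_list (map g (seg_widths k (real c) q (S q)))) - real k * (real c - 1)
        \<le> sum_list (map w L)"
    by (simp add: sum_subtractf sum_distrib_left)
  have "W k g L = sum_list (map w L)" by (simp add: W_def w_def)
  then show ?thesis using A k2 unfolding g_def Sz_def by (simp add: algebra_simps)
qed

end
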